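(* Let $s\ge0$ be an integer and let $G$ be a graph such that $G$ is not an $s$-star, but $G\setminus v$ is an $s$-star for every $v\in V(G)$. Then $|V(G)|\le 4s+5$.
   Context: Graphs are finite and simple. A set $X\subseteq V(G)$ is a crown of $G$ if every vertex $v\in V(G)$ is either adjacent to all vertices of $X\setminus\{v\}$ or adjacent to none of them (in particular $G[X]$ is complete or edgeless). A set $S\subseteq V(G)$ is a core of $G$ if $V(G)\setminus S$ is a crown. $G$ is an $s$-star if it has a core of size at most $s$. *)

theory Defs
  imports Main
begin

text \<open>A finite simple graph is given by a finite vertex set V and an edge relation E
  that is symmetric and irreflexive (only its restriction to V matters).
  Deleting a vertex v gives the induced subgraph on V - {v} with the same E.\<close>

definition simple_graph :: "'a set \<Rightarrow> ('a \<Rightarrow> 'a \<Rightarrow> bool) \<Rightarrow> bool" where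
  "simple_graph V E \<longleftrightarrow> finite V \<and> (\<forall>u\<in>V. \<forall>w\<in>V. E u w \<longleftrightarrow> E w u) \<and> (\<forall>u\<in>V. \<not> E u u)"

definition crown :: "'a set \<Rightarrow> ('a \<Rightarrow> 'a \<Rightarrow> bool) \<Rightarrow> 'a set \<Rightarrow> bool" where
  "crown V E X \<longleftrightarrow> X \<subseteq> V \<and>
     (\<forall>v\<in>V. (\<forall>x\<in>X - {v}. E v x) \<or> (\<forall>x\<in>X - {v}. \<not> E v x))"

definition core :: "'a set \<Rightarrow> ('a \<Rightarrow> 'a \<Rightarrow> bool) \<Rightarrow> 'a set \<Rightarrow> bool" where
  "core V E S \<longleftrightarrow> S \<subseteq> V \<and> crown V E (V - S)"

definition s_star :: "nat \<Rightarrow> 'a set \<Rightarrow> ('a \<Rightarrow> 'a \<Rightarrow> bool) \<Rightarrow> bool" where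
  "s_star s V E \<longleftrightarrow> (\<exists>S. core V E S \<and> card S \<le> s)"

end

theory Submission
  imports Defs
begin

lemma crown_inter:
  assumes "crown (V-{a}) E X" "crown (V-{b}) E Y" "a \<noteq> b" "X \<subseteq> V"
  shows "crown V E (X \<inter> Y)"
  unfolding crown_def
proof (intro conjI ballI)
  show "X \<inter> Y \<subseteq> V" using assms(4) by auto
next
  fix v assume v: "v \<in> V"
  show "(\<forall>x\<in>X \<inter> Y - {v}. E v x) \<or> (\<forall>x\<in>X \<inter> Y - {v}. \<not> E v x)"
  proof (cases "v = a")
    case True
    then have "v \<in> V - {b}" using v assms(3) by auto
    then show ?thesis using assms(2) unfolding crown_def by blast
  next
    case False
    then have "v \<in> V - {a}" using v by auto
    then show ?thesis using assms(1) unfolding crown_def by blast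
  qed
qed

lemma crown_union:
  assumes sym: "\<forall>u\<in>V. \<forall>w\<in>V. E u w \<longleftrightarrow> E w u"
    and M: "crown V E M" and c: "c \<in> M" and T: "crown (V-{c}) E T"
    and p: "p \<in> M" "p \<in> T" and q: "q \<in> M" "q \<in> T" and pq: "p \<noteq> q"
  shows "crown V E (M \<union> T)"
  unfolding crown_def
proof (intro conjI ballI)
  show "M \<union> T \<subseteq> V" using M T unfolding crown_def by auto
next
  fix v assume v: "v \<in> V"
  have MV: "M \<subseteq> V" and TV: "T \<subseteq> V - {c}" using M T unfolding crown_def by auto
  have Mu: "\<And>u. u \<in> V \<Longrightarrow> (\<forall>x\<in>M - {u}. E u x) \<or> (\<forall>x\<in>M - {u}. \<not> E u x)"
    using M unfolding crown_def by blast
  have Tu: "\<And>u. u \<in> V - {c} \<Longrightarrow> (\<forall>x\<in>T - {u}. E u x) \<or> (\<forall>x\<in>T - {u}. \<not> E u x)"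
    using T unfolding crown_def by blast
  show "(\<forall>x\<in>M \<union> T - {v}. E v x) \<or> (\<forall>x\<in>M \<union> T - {v}. \<not> E v x)"
  proof (cases "v = c")
    case False
    then have "v \<in> V - {c}" using v by auto
    from Mu[OF v] Tu[OF this] pq p q show ?thesis by blast
  next
    case True
    have cp: "c \<noteq> p" "c \<noteq> q" using p q TV by auto
    have key: "E c x = E c p" if x: "x \<in> T" "x \<notin> M" for x
    proof -
      have xV: "x \<in> V" and xc: "x \<noteq> c" using x TV by auto
      have pV: "p \<in> V" "q \<in> V" "c \<in> V" using p q c MV by auto
      have "E x c = E x p" using Mu[OF xV] x c p by blast
      moreover have "E p c = E p q" using Mu[OF pV(1)] c q cp pq by blast
      moreover have "E p x = E p q" using Tu[of p] pV cp x q pq p by blast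
      ultimately show ?thesis using sym xV pV by metis
    qed
    from Mu[of c] c MV have "(\<forall>x\<in>M - {c}. E c x) \<or> (\<forall>x\<in>M - {c}. \<not> E c x)" by blast
    then have mm: "E c x = E c p" if "x \<in> M - {c}" for x using that p cp by blast
    have all: "E c x = E c p" if "x \<in> M \<union> T - {c}" for x
    proof (cases "x \<in> M")
      case True then show ?thesis using mm that by blast
    next
      case False then show ?thesis using key that by blast
    qed
    show ?thesis
    proof (cases "E c p")
      case True then show ?thesis using all \<open>v = c\<close> by blast
    next
      case False then show ?thesis using all \<open>v = c\<close> by blast
    qed
  qed
qed

lemma Tex:
  assumes fin: "finite V" and st: "s_star s (V - {v}) E" and v: "v \<in> V"
  shows "\<exists>T. crown (V - {v}) E T \<and> T \<subseteq> V - {v} \<and> card T + s + 1 \<ge> card V"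
proof -
  obtain S where S: "core (V - {v}) E S" "card S \<le> s" using st unfolding s_star_def by blast
  have SV: "S \<subseteq> V - {v}" using S(1) unfolding core_def by blast
  have "card (V - {v} - S) = card (V - {v}) - card S"
    using SV fin by (meson card_Diff_subset finite_Diff finite_subset)
  moreover have "card (V - {v}) = card V - 1" using v fin by simp
  moreover have "card S \<le> card (V - {v})" using SV fin by (intro card_mono) auto
  moreover have "card V \<ge> 1" using v fin by (metis One_nat_def Suc_leI card_gt_0_iff empty_iff)
  ultimately have "card (V - {v} - S) + s + 1 \<ge> card V" using S(2) by linarith
  moreover have "crown (V - {v}) E (V - {v} - S)" using S(1) unfolding core_def by blast
  ultimately show ?thesis by (intro exI[of _ "V - {v} - S"]) blast
qed

theorem lemma4p1:
  fixes s :: nat and V :: "'a set" and E :: "'a \<Rightarrow> 'a \<Rightarrow> bool"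
  assumes "simple_graph V E"
    and "\<not> s_star s V E"
    and "\<forall>v\<in>V. s_star s (V - {v}) E"
  shows "card V \<le> 4 * s + 5"
proof (rule ccontr)
  assume big: "\<not> card V \<le> 4 * s + 5"
  have fin: "finite V" and sym: "\<forall>u\<in>V. \<forall>w\<in>V. E u w \<longleftrightarrow> E w u"
    using assms(1) unfolding simple_graph_def by auto
  have T: "\<exists>T. crown (V - {v}) E T \<and> T \<subseteq> V - {v} \<and> card T + s + 1 \<ge> card V" if "v \<in> V" for v
    using Tex[OF fin _ that] assms(3) that by auto
  obtain a b where ab: "a \<in> V" "b \<in> V" "a \<noteq> b"
  proof -
    have "2 \<le> card V" using big by auto
    then obtain A where "A \<subseteq> V" "card A = 2" by (meson obtain_subset_with_card_n)
    then show ?thesis using that by (auto simp: card_2_iff)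
  qed
  obtain Ta where Ta: "crown (V - {a}) E Ta" "Ta \<subseteq> V - {a}" "card Ta + s + 1 \<ge> card V" using T ab by blast
  obtain Tb where Tb: "crown (V - {b}) E Tb" "Tb \<subseteq> V - {b}" "card Tb + s + 1 \<ge> card V" using T ab by blast
  define Y where "Y = Ta \<inter> Tb"
  have Ycr: "crown V E Y" unfolding Y_def using crown_inter[OF Ta(1) Tb(1) ab(3)] Ta(2) by auto
  have "card (Ta \<union> Tb) \<le> card V" using Ta Tb fin by (intro card_mono) auto
  moreover have "card (Ta \<union> Tb) + card Y = card Ta + card Tb" unfolding Y_def
    using Ta Tb fin card_Un_Int[of Ta Tb] by (metis Diff_subset finite_subset order_trans add.commute)
  ultimately have cY: "card Y + 2 * s + 2 \<ge> card V" using Ta Tb by linarith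
  then have "Y \<noteq> {}" using big by auto
  then obtain c where c: "c \<in> Y" by auto
  have cV: "c \<in> V" using c Ycr unfolding crown_def by auto
  obtain Tc where Tc: "crown (V - {c}) E Tc" "Tc \<subseteq> V - {c}" "card Tc + s + 1 \<ge> card V" using T cV by blast
  have YV: "Y \<subseteq> V" using Ycr unfolding crown_def by auto
  have "card (Tc \<union> Y) \<le> card V" using Tc YV fin by (intro card_mono) auto
  moreover have "card (Tc \<union> Y) + card (Tc \<inter> Y) = card Tc + card Y"
    using Tc YV fin card_Un_Int[of Tc Y] by (metis Diff_subset finite_subset order_trans add.commute)
  ultimately have "card (Tc \<inter> Y) \<ge> 2" using cY Tc big by linarith
  then obtain p q where pq: "p \<in> Tc \<inter> Y" "q \<in> Tc \<inter> Y" "p \<noteq> q"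
  proof -
    have "\<not> card (Tc \<inter> Y) \<le> Suc 0" using \<open>card (Tc \<inter> Y) \<ge> 2\<close> by linarith
    then show ?thesis using that card_le_Suc0_iff_eq[of "Tc \<inter> Y"] Tc fin
      by (meson finite_Int finite_subset Diff_subset order_trans)
  qed
  have Z: "crown V E (Y \<union> Tc)"
    using crown_union[OF sym Ycr c Tc(1)] pq by auto
  have ZV: "Y \<union> Tc \<subseteq> V" using Z unfolding crown_def by auto
  have "insert c Tc \<subseteq> Y \<union> Tc" using c by auto
  then have "card (insert c Tc) \<le> card (Y \<union> Tc)" using ZV fin by (intro card_mono) (auto intro: finite_subset)
  moreover have "card (insert c Tc) = card Tc + 1" using Tc fin by (subst card_insert_disjoint) (auto intro: finite_subset)
  ultimately have cZ: "card (Y \<union> Tc) + s \<ge> card V" using Tc by linarith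
  have "core V E (V - (Y \<union> Tc))" unfolding core_def using Z ZV by (simp add: Diff_Diff_Int Int_absorb1)
  moreover have "card (V - (Y \<union> Tc)) = card V - card (Y \<union> Tc)"
    using ZV fin by (meson card_Diff_subset finite_subset)
  then have "card (V - (Y \<union> Tc)) \<le> s" using cZ by linarith
  ultimately show False using assms(2) unfolding s_star_def by blast
qed

end
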